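(* Let $(X,f)$ be a dynamical system (with $X$ a compact metric space and $f:X\to X$ continuous) which has only finitely many basic sets. Then every terminal basic set is an attractor, and hence is visible. Furthermore, the union $\bigcup_B G(B)$ of the basins of all the basic sets $B$ is a dense open subset of $X$.
   Context: For a compact metric space $(X,d)$ and continuous $f:X\to X$: the chain relation $\mathcal{C}f\subset X\times X$ consists of the pairs $(x,y)$ such that for every $\epsilon>0$ there is a sequence $x_0=x,x_1,\dots,x_n=y$ with $n\ge 1$ and $d(f(x_i),x_{i+1})\le\epsilon$ for $0\le i<n$. Write $\mathcal{C}f(x)=\{y:(x,y)\in\mathcal{C}f\}$. A point $x$ is chain recurrent if $(x,x)\in\mathcal{C}f$; the basic sets (chain components) are the equivalence classes of chain recurrent points under the relation "$(x,y)\in\mathcal{C}f$ and $(y,x)\in\mathcal{C}f$". A basic set $B$ is terminal if $x\in B$ implies $\mathcal{C}f(x)\subset B$. For $x\in X$, $\omega f(x)$ is the set of limit points of the sequence $f(x),f^2(x),\dots$. For a closed set $A$ with $f(A)\subset A$, the basin of $A$ is the open set $G(A)=\operatorname{int}\{x:\omega f(x)\subset A\}$. A basic set is visible if its basin is nonempty. A set $A$ is an attractor if there is a closed set $U$ with $f(U)\subset \operatorname{int} U$ and $A=\bigcap_{n\ge 0}f^n(U)$. *)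

theory Defs
  imports "HOL-Analysis.Analysis"
begin

text \<open>The space X is the whole type 'a (a compact metric space). Chain relation:\<close>
definition chain_rel :: "('a::metric_space \<Rightarrow> 'a) \<Rightarrow> ('a \<times> 'a) set" where
  "chain_rel f = {(x, y). \<forall>e>0. \<exists>n\<ge>1. \<exists>xs :: nat \<Rightarrow> 'a.
      xs 0 = x \<and> xs n = y \<and> (\<forall>i<n. dist (f (xs i)) (xs (Suc i)) \<le> e)}"

definition chain_recurrent :: "('a::metric_space \<Rightarrow> 'a) \<Rightarrow> 'a \<Rightarrow> bool" where
  "chain_recurrent f x \<longleftrightarrow> (x, x) \<in> chain_rel f"

definition basic_sets :: "('a::metric_space \<Rightarrow> 'a) \<Rightarrow> 'a set set" where
  "basic_sets f = {B. \<exists>x. chain_recurrent f x \<and>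
      B = {y. chain_recurrent f y \<and> (x, y) \<in> chain_rel f \<and> (y, x) \<in> chain_rel f}}"

definition terminal :: "('a::metric_space \<Rightarrow> 'a) \<Rightarrow> 'a set \<Rightarrow> bool" where
  "terminal f B \<longleftrightarrow> B \<in> basic_sets f \<and> (\<forall>x\<in>B. chain_rel f `` {x} \<subseteq> B)"

definition omega_limit :: "('a::metric_space \<Rightarrow> 'a) \<Rightarrow> 'a \<Rightarrow> 'a set" where
  "omega_limit f x = {y. \<forall>e>0. \<forall>N. \<exists>n\<ge>N. n \<ge> 1 \<and> dist ((f ^^ n) x) y < e}"

definition basin :: "('a::metric_space \<Rightarrow> 'a) \<Rightarrow> 'a set \<Rightarrow> 'a set" where
  "basin f A = interior {x. omega_limit f x \<subseteq> A}"

definition visible :: "('a::metric_space \<Rightarrow> 'a) \<Rightarrow> 'a set \<Rightarrow> bool" where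
  "visible f B \<longleftrightarrow> basin f B \<noteq> {}"

definition attractor :: "('a::metric_space \<Rightarrow> 'a) \<Rightarrow> 'a set \<Rightarrow> bool" where
  "attractor f A \<longleftrightarrow> (\<exists>U. closed U \<and> f ` U \<subseteq> interior U \<and> A = (\<Inter>n. (f ^^ n) ` U))"

end

theory Submission
  imports Defs "HOL-Analysis.Analysis"
begin


definition chn :: "('a::metric_space \<Rightarrow> 'a) \<Rightarrow> real \<Rightarrow> 'a \<Rightarrow> 'a \<Rightarrow> bool" where
  "chn f e x y \<longleftrightarrow> (\<exists>n\<ge>1. \<exists>xs :: nat \<Rightarrow> 'a.
      xs 0 = x \<and> xs n = y \<and> (\<forall>i<n. dist (f (xs i)) (xs (Suc i)) \<le> e))"

lemma chain_rel_chn: "(x,y) \<in> chain_rel f \<longleftrightarrow> (\<forall>e>0. chn f e x y)"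
  unfolding chain_rel_def chn_def by auto

lemma chn_step: "dist (f x) y \<le> e \<Longrightarrow> chn f e x y"
  unfolding chn_def
  by (rule exI[of _ 1], simp, rule exI[of _ "\<lambda>i. if i = 0 then x else y"], simp)

lemma chn_nonneg: assumes "chn f e x y" shows "0 \<le> e"
proof -
  obtain n xs where n: "n \<ge> 1" "\<forall>i<n. dist (f (xs i)) (xs (Suc i)) \<le> e"
    using assms(1) unfolding chn_def by blast
  hence "dist (f (xs 0)) (xs (Suc 0)) \<le> e" by simp
  thus ?thesis using zero_le_dist[of "f (xs 0)" "xs (Suc 0)"] by linarith
qed

lemma chn_mono:
  assumes "chn f e x y" "e \<le> e'" shows "chn f e' x y"
proof -
  obtain n xs where n: "n \<ge> 1" "xs 0 = x" "xs n = y" "\<forall>i<n. dist (f (xs i)) (xs (Suc i)) \<le> e"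
    using assms(1) unfolding chn_def by blast
  hence "\<forall>i<n. dist (f (xs i)) (xs (Suc i)) \<le> e'" using assms(2) by force
  thus ?thesis unfolding chn_def using n by blast
qed

lemma chn_trans:
  assumes "chn f e x y" "chn f e y z" shows "chn f e x z"
proof -
  obtain n xs where n: "n \<ge> 1" "xs 0 = x" "xs n = y" "\<forall>i<n. dist (f (xs i)) (xs (Suc i)) \<le> e"
    using assms(1) unfolding chn_def by blast
  obtain m ys where m: "m \<ge> 1" "ys 0 = y" "ys m = z" "\<forall>i<m. dist (f (ys i)) (ys (Suc i)) \<le> e"
    using assms(2) unfolding chn_def by blast
  define zs where "zs = (\<lambda>i. if i \<le> n then xs i else ys (i - n))"
  have "\<forall>i<n+m. dist (f (zs i)) (zs (Suc i)) \<le> e"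
  proof (intro allI impI)
    fix i assume i: "i < n + m"
    show "dist (f (zs i)) (zs (Suc i)) \<le> e"
    proof (cases "i < n")
      case True thus ?thesis using n by (auto simp: zs_def)
    next
      case False
      then obtain j where j: "i = n + j" by (metis le_iff_add not_less)
      hence "j < m" using i by simp
      moreover have "zs i = ys j" using j m n by (cases j) (auto simp: zs_def)
      moreover have "zs (Suc i) = ys (Suc j)" using j by (auto simp: zs_def)
      ultimately show ?thesis using m by simp
    qed
  qed
  moreover have "zs 0 = x" "zs (n+m) = z" using n m by (auto simp: zs_def)
  ultimately show ?thesis unfolding chn_def using n m
    by (intro exI[of _ "n+m"]) auto
qed

lemma chn_end:
  assumes "chn f e x y" "dist y z \<le> d" shows "chn f (e + d) x z"
proof -
  obtain n xs where n: "n \<ge> 1" "xs 0 = x" "xs n = y" "\<forall>i<n. dist (f (xs i)) (xs (Suc i)) \<le> e"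
    using assms(1) unfolding chn_def by blast
  have H: "\<forall>i<n. dist (f ((xs(n:=z)) i)) ((xs(n:=z)) (Suc i)) \<le> e + d"
  proof (intro allI impI)
    fix i assume i: "i < n"
    show "dist (f ((xs(n:=z)) i)) ((xs(n:=z)) (Suc i)) \<le> e + d"
    proof (cases "Suc i = n")
      case True
      have "dist (f (xs i)) z \<le> dist (f (xs i)) y + dist y z" by (rule dist_triangle)
      thus ?thesis using True i n assms(2) by auto
    next
      case False
      have "0 \<le> d" using assms(2) zero_le_dist[of y z] by linarith
      thus ?thesis using False i n by auto
    qed
  qed
  show ?thesis unfolding chn_def
    apply (rule exI[of _ n]) apply (rule conjI) using n apply simp
    apply (rule exI[of _ "xs(n:=z)"]) using H n by simp
qed

lemma chn_start:
  assumes "chn f e x y" "dist (f x') (f x) \<le> d" shows "chn f (e + d) x' y"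
proof -
  obtain n xs where n: "n \<ge> 1" "xs 0 = x" "xs n = y" "\<forall>i<n. dist (f (xs i)) (xs (Suc i)) \<le> e"
    using assms(1) unfolding chn_def by blast
  have H: "\<forall>i<n. dist (f ((xs(0:=x')) i)) ((xs(0:=x')) (Suc i)) \<le> e + d"
  proof (intro allI impI)
    fix i assume i: "i < n"
    show "dist (f ((xs(0:=x')) i)) ((xs(0:=x')) (Suc i)) \<le> e + d"
    proof (cases "i = 0")
      case True
      have "dist (f x') (xs 1) \<le> dist (f x') (f x) + dist (f x) (xs 1)" by (rule dist_triangle)
      moreover have "dist (f x) (xs 1) \<le> e" using n i True by force
      ultimately show ?thesis using True assms(2) by simp
    next
      case False
      have "0 \<le> d" using assms(2) zero_le_dist[of "f x'" "f x"] by linarith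
      thus ?thesis using False i n by auto
    qed
  qed
  show ?thesis unfolding chn_def
    apply (rule exI[of _ n]) apply (rule conjI) using n apply simp
    apply (rule exI[of _ "xs(0:=x')"]) using H n by simp
qed

lemma chn_orbit:
  assumes "n < m" shows "chn f 0 ((f^^n) x) ((f^^m) x)"
  unfolding chn_def
  using assms by (intro exI[of _ "m - n"] conjI exI[of _ "\<lambda>i. (f^^(n+i)) x"]) auto

lemma chn_penult:
  assumes "chn f e x y" shows "\<exists>p. dist (f p) y \<le> e \<and> (p = x \<or> chn f e x p)"
proof -
  obtain n xs where n: "n \<ge> 1" "xs 0 = x" "xs n = y" "\<forall>i<n. dist (f (xs i)) (xs (Suc i)) \<le> e"
    using assms(1) unfolding chn_def by blast
  show ?thesis
  proof (cases "n = 1")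
    case True thus ?thesis using n by (intro exI[of _ x]) auto
  next
    case False
    have "chn f e x (xs (n-1))" unfolding chn_def using n False
      by (intro exI[of _ "n-1"]) auto
    moreover have "dist (f (xs (n-1))) (xs (Suc (n-1))) \<le> e" using n(4)[rule_format, of "n-1"] n(1) by simp
    moreover have "Suc (n-1) = n" using n by simp
    ultimately show ?thesis using n by metis
  qed
qed

lemma C_trans: "(x,y) \<in> chain_rel f \<Longrightarrow> (y,z) \<in> chain_rel f \<Longrightarrow> (x,z) \<in> chain_rel f"
  unfolding chain_rel_chn by (meson chn_trans)

lemma C_step: "(x, f x) \<in> chain_rel f"
  unfolding chain_rel_chn by (auto intro: chn_step)

lemma C_closure_end:
  assumes "\<And>d. d > 0 \<Longrightarrow> \<exists>y'. dist y' y < d \<and> (x,y') \<in> chain_rel f"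
  shows "(x,y) \<in> chain_rel f"
  unfolding chain_rel_chn
proof (intro allI impI)
  fix e :: real assume e: "e > 0"
  obtain y' where y': "dist y' y < e/2" "(x,y') \<in> chain_rel f" using assms[of "e/2"] e by auto
  hence "chn f (e/2) x y'" using e unfolding chain_rel_chn by auto
  from chn_end[OF this, of y "e/2"] y' show "chn f e x y" by simp
qed




locale dyn =
  fixes f :: "'a::metric_space \<Rightarrow> 'a"
  assumes cpt: "compact (UNIV :: 'a set)" and cont: "continuous_on UNIV f"
begin

lemma contE: "e > 0 \<Longrightarrow> \<exists>d>0. \<forall>x'. dist x' x < d \<longrightarrow> dist (f x') (f x) < e"
  using cont unfolding continuous_on_iff by blast

lemma seqc: fixes s :: "nat \<Rightarrow> 'a" obtains l and r :: "nat \<Rightarrow> nat" where "strict_mono r" "(s \<circ> r) \<longlonglongrightarrow> l"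
  using seq_compactE[OF compact_imp_seq_compact[OF cpt], of s] by blast

lemma cont_funpow: "continuous_on UNIV (f^^n)"
proof (induction n)
  case 0 thus ?case by (simp add: continuous_on_id)
next
  case (Suc n)
  have "continuous_on UNIV (f \<circ> (f^^n))"
    by (rule continuous_on_compose) (use Suc cont in \<open>auto intro: continuous_on_subset\<close>)
  thus ?case by simp
qed

lemma C_closure_start:
  assumes "\<And>d. d > 0 \<Longrightarrow> \<exists>y'. dist y' y < d \<and> (y',x) \<in> chain_rel f"
  shows "(y,x) \<in> chain_rel f"
  unfolding chain_rel_chn
proof (intro allI impI)
  fix e :: real assume e: "e > 0"
  obtain d where d: "d > 0" "\<forall>x'. dist x' y < d \<longrightarrow> dist (f x') (f y) < e/2"
    using contE[of "e/2" y] e by auto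
  obtain y' where y': "dist y' y < d" "(y',x) \<in> chain_rel f" using assms[OF d(1)] by auto
  hence "chn f (e/2) y' x" using e unfolding chain_rel_chn by auto
  moreover have "dist (f y') (f y) < e/2" using d y' by auto
  hence "dist (f y) (f y') \<le> e/2" by (simp add: dist_commute)
  ultimately show "chn f e y x" using chn_start[of f "e/2" y' x y "e/2"] by simp
qed

definition cls :: "'a \<Rightarrow> 'a set" where
  "cls y = {z. chain_recurrent f z \<and> (y, z) \<in> chain_rel f \<and> (z, y) \<in> chain_rel f}"

lemma bs_cls: "chain_recurrent f y \<Longrightarrow> cls y \<in> basic_sets f"
  unfolding basic_sets_def cls_def by blast

lemma in_cls: "chain_recurrent f y \<Longrightarrow> y \<in> cls y"
  unfolding cls_def chain_recurrent_def by blast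

lemma bs_eq: assumes "B \<in> basic_sets f" "y \<in> B" shows "B = cls y"
proof -
  obtain x where x: "chain_recurrent f x" "B = cls x"
    using assms(1) unfolding basic_sets_def cls_def by blast
  have y: "(x,y) \<in> chain_rel f" "(y,x) \<in> chain_rel f" using assms(2) x unfolding cls_def by auto
  show ?thesis unfolding x cls_def using y C_trans by blast
qed

lemma bs_cr: "B \<in> basic_sets f \<Longrightarrow> y \<in> B \<Longrightarrow> chain_recurrent f y"
  unfolding basic_sets_def by blast

lemma bs_ne: assumes "B \<in> basic_sets f" shows "B \<noteq> {}"
proof -
  obtain x where x: "chain_recurrent f x" "B = cls x"
    using assms(1) unfolding basic_sets_def cls_def by blast
  thus ?thesis using in_cls by auto
qed

lemma bs_closed: assumes "B \<in> basic_sets f" shows "closed B"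
proof -
  obtain x where x: "chain_recurrent f x" "B = cls x"
    using assms(1) unfolding basic_sets_def cls_def by blast
  have "closure B \<subseteq> B"
  proof
    fix y assume "y \<in> closure B"
    hence ap: "\<And>d. d > 0 \<Longrightarrow> \<exists>y'\<in>B. dist y' y < d" unfolding closure_approachable by blast
    have 1: "(x,y) \<in> chain_rel f"
      by (rule C_closure_end) (use ap x in \<open>auto simp: cls_def\<close>)
    have 2: "(y,x) \<in> chain_rel f"
      by (rule C_closure_start) (use ap x in \<open>auto simp: cls_def\<close>)
    have "(y,y) \<in> chain_rel f" by (rule C_trans[OF 2 1])
    thus "y \<in> B" using 1 2 unfolding x cls_def chain_recurrent_def by simp
  qed
  thus ?thesis using closure_subset_eq by blast
qed

lemma om_ne: "omega_limit f x \<noteq> {}"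
proof -
  obtain l r where r: "strict_mono r" "((\<lambda>j. (f^^(Suc j)) x) \<circ> r) \<longlonglongrightarrow> l"
    using seqc by blast
  have "l \<in> omega_limit f x" unfolding omega_limit_def
  proof (intro CollectI allI impI)
    fix e :: real and N :: nat assume e: "e > 0"
    obtain M where M: "\<forall>j\<ge>M. dist ((f^^(Suc (r j))) x) l < e"
      using r(2) e unfolding lim_sequentially by auto
    have "N \<le> r (max M N)" using seq_suble[OF r(1), of "max M N"] by simp
    thus "\<exists>n\<ge>N. n \<ge> 1 \<and> dist ((f ^^ n) x) l < e"
      using M by (intro exI[of _ "Suc (r (max M N))"]) auto
  qed
  thus ?thesis by blast
qed

lemma om_C: assumes "y \<in> omega_limit f x" "z \<in> omega_limit f x" shows "(y,z) \<in> chain_rel f"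
  unfolding chain_rel_chn
proof (intro allI impI)
  fix e :: real assume e: "e > 0"
  obtain d where d: "d > 0" "\<forall>x'. dist x' y < d \<longrightarrow> dist (f x') (f y) < e/2"
    using contE[of "e/2" y] e by auto
  have "\<exists>n\<ge>0. n \<ge> 1 \<and> dist ((f^^n) x) y < d" using assms(1) d unfolding omega_limit_def by blast
  then obtain n where n: "dist ((f^^n) x) y < d" by blast
  have h: "\<forall>e>0. \<forall>N. \<exists>n\<ge>N. n \<ge> 1 \<and> dist ((f^^n) x) z < e" using assms(2) unfolding omega_limit_def by blast
  have "e/2 > 0" using e by simp
  hence "\<exists>m\<ge>Suc n. m \<ge> 1 \<and> dist ((f^^m) x) z < e/2" using h by blast
  then obtain m where m: "m \<ge> Suc n" "dist ((f^^m) x) z < e/2" by blast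
  have "chn f 0 ((f^^n) x) ((f^^m) x)" using chn_orbit[of n m f x] m(1) by simp
  moreover have "dist (f ((f^^n) x)) (f y) < e/2" using d n by auto
  hence "dist (f y) (f ((f^^n) x)) \<le> e/2" by (simp add: dist_commute)
  ultimately have "chn f (e/2) y ((f^^m) x)" using chn_start[of f 0 "(f^^n) x" "(f^^m) x" y "e/2"] by simp
  from chn_end[OF this, of z "e/2"] m(2) show "chn f e y z" by simp
qed

lemma om_cls: assumes "y \<in> omega_limit f x" shows "omega_limit f x \<subseteq> cls y"
proof
  fix z assume z: "z \<in> omega_limit f x"
  have 1: "(y,z) \<in> chain_rel f" by (rule om_C[OF assms z])
  have 2: "(z,y) \<in> chain_rel f" by (rule om_C[OF z assms])
  have "(z,z) \<in> chain_rel f" by (rule C_trans[OF 2 1])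
  thus "z \<in> cls y" using 1 2 unfolding cls_def chain_recurrent_def by simp
qed

lemma om_cr: "y \<in> omega_limit f x \<Longrightarrow> chain_recurrent f y"
  using om_C[of y x y] unfolding chain_recurrent_def by simp

lemma cover: "\<exists>B\<in>basic_sets f. omega_limit f x \<subseteq> B"
proof -
  obtain y where y: "y \<in> omega_limit f x" using om_ne[of x] by auto
  show ?thesis using bs_cls[OF om_cr[OF y]] om_cls[OF y] by blast
qed

lemma E_char: assumes "B \<in> basic_sets f"
  shows "omega_limit f x \<subseteq> B \<longleftrightarrow> omega_limit f x \<inter> B \<noteq> {}"
proof
  assume "omega_limit f x \<subseteq> B" thus "omega_limit f x \<inter> B \<noteq> {}" using om_ne by blast
next
  assume "omega_limit f x \<inter> B \<noteq> {}"
  then obtain y where y: "y \<in> omega_limit f x" "y \<in> B" by blast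
  show "omega_limit f x \<subseteq> B" using bs_eq[OF assms y(2)] om_cls[OF y(1)] by simp
qed

lemma E_disj: assumes "B1 \<in> basic_sets f" "B2 \<in> basic_sets f" "B1 \<noteq> B2"
  shows "{x. omega_limit f x \<subseteq> B1} \<inter> {x. omega_limit f x \<subseteq> B2} = {}"
proof -
  { fix x assume s: "omega_limit f x \<subseteq> B1" "omega_limit f x \<subseteq> B2"
    obtain y where "y \<in> omega_limit f x" using om_ne[of x] by auto
    hence "y \<in> B1" "y \<in> B2" using s by auto
    hence False using bs_eq[OF assms(1)] bs_eq[OF assms(2)] assms(3) by auto }
  thus ?thesis by blast
qed

end



context dyn begin

lemma open_approach: "open {x. \<exists>n\<ge>N. \<exists>b\<in>B. dist ((f^^n) x) b < r}"
proof -
  have eq: "{x. \<exists>n\<ge>N. \<exists>b\<in>B. dist ((f^^n) x) b < r} = (\<Union>n\<in>{N..}. (f^^n) -` (\<Union>b\<in>B. ball b r))"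
    by (auto simp: dist_commute; blast)
  have "\<And>n. open ((f^^n) -` (\<Union>b\<in>B. ball b r))"
  proof -
    fix n
    have "\<And>x. continuous (at x) (f^^n)"
      using cont_funpow[of n] continuous_on_eq_continuous_at[OF open_UNIV] by blast
    thus "open ((f^^n) -` (\<Union>b\<in>B. ball b r))"
      by (intro continuous_open_vimage) auto
  qed
  thus ?thesis unfolding eq by blast
qed

lemma E_Gdelta: assumes "B \<in> basic_sets f"
  shows "\<exists>G. countable G \<and> (\<forall>T\<in>G. open T) \<and> {x. omega_limit f x \<subseteq> B} = \<Inter>G"
proof -
  define G where "G = (\<lambda>(a::nat,N). {x. \<exists>n\<ge>N. \<exists>b\<in>B. dist ((f^^n) x) b < inverse (Suc a)}) ` UNIV"
  have "countable G" unfolding G_def by simp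
  moreover have "\<forall>T\<in>G. open T" unfolding G_def using open_approach by auto
  moreover have "{x. omega_limit f x \<subseteq> B} = \<Inter>G"
  proof (intro equalityI subsetI)
    fix x assume "x \<in> {x. omega_limit f x \<subseteq> B}"
    hence "omega_limit f x \<inter> B \<noteq> {}" using E_char[OF assms] by simp
    then obtain y where y: "y \<in> omega_limit f x" "y \<in> B" by blast
    show "x \<in> \<Inter>G" unfolding G_def
    proof (clarsimp)
      fix a N :: nat
      have "inverse (real (Suc a)) > 0" by simp
      then obtain n where "n \<ge> N" "dist ((f^^n) x) y < inverse (Suc a)"
        using y(1) unfolding omega_limit_def by blast
      thus "\<exists>n\<ge>N. \<exists>b\<in>B. dist ((f ^^ n) x) b < inverse (1 + real a)" using y(2) by auto
    qed
  next
    fix x assume x: "x \<in> \<Inter>G"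
    have "\<forall>k. \<exists>n b. n \<ge> Suc k \<and> b \<in> B \<and> dist ((f^^n) x) b < inverse (Suc k)"
    proof
      fix k
      have "x \<in> {x. \<exists>n\<ge>Suc k. \<exists>b\<in>B. dist ((f^^n) x) b < inverse (Suc k)}"
        using x unfolding G_def by blast
      thus "\<exists>n b. n \<ge> Suc k \<and> b \<in> B \<and> dist ((f^^n) x) b < inverse (Suc k)" by blast
    qed
    then obtain nn bb where nb: "\<And>k. nn k \<ge> Suc k" "\<And>k. bb k \<in> B"
      "\<And>k. dist ((f^^(nn k)) x) (bb k) < inverse (Suc k)"
      by metis
    obtain l r where r: "strict_mono r" "((\<lambda>k. (f^^(nn k)) x) \<circ> r) \<longlonglongrightarrow> l"
      using seqc by blast
    have lom: "l \<in> omega_limit f x" unfolding omega_limit_def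
    proof (intro CollectI allI impI)
      fix e :: real and N :: nat assume e: "e > 0"
      obtain M where M: "\<forall>j\<ge>M. dist ((f^^(nn (r j))) x) l < e"
        using r(2) e unfolding lim_sequentially by auto
      have "N \<le> r (max M N)" using seq_suble[OF r(1), of "max M N"] by simp
      hence "nn (r (max M N)) \<ge> N" "nn (r (max M N)) \<ge> 1" using nb(1)[of "r (max M N)"] by auto
      thus "\<exists>n\<ge>N. n \<ge> 1 \<and> dist ((f ^^ n) x) l < e"
        using M by (intro exI[of _ "nn (r (max M N))"]) auto
    qed
    have "l \<in> closure B" unfolding closure_approachable
    proof (intro allI impI)
      fix e :: real assume e: "e > 0"
      obtain M where M: "\<forall>j\<ge>M. dist ((f^^(nn (r j))) x) l < e/2"
        using r(2) e unfolding lim_sequentially by (metis half_gt_zero comp_apply)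
      obtain M' where M': "inverse (real (Suc M')) < e/2" using reals_Archimedean[of "e/2"] e by auto
      define j where "j = max M M'"
      have rj: "r j \<ge> M'" using seq_suble[OF r(1), of j] unfolding j_def by simp
      have "inverse (real (Suc (r j))) \<le> inverse (real (Suc M'))" using rj
        by (intro le_imp_inverse_le) auto
      hence 1: "dist ((f^^(nn (r j))) x) (bb (r j)) < e/2" using nb(3)[of "r j"] M' by linarith
      have 2: "dist ((f^^(nn (r j))) x) l < e/2" using M unfolding j_def by simp
      have "dist (bb (r j)) l \<le> dist (bb (r j)) ((f^^(nn (r j))) x) + dist ((f^^(nn (r j))) x) l"
        by (rule dist_triangle)
      hence "dist (bb (r j)) l < e" using 1 2 by (simp add: dist_commute)
      thus "\<exists>y\<in>B. dist y l < e" using nb(2) by blast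
    qed
    hence "l \<in> B" using bs_closed[OF assms] closure_closed by blast
    hence "omega_limit f x \<inter> B \<noteq> {}" using lom by blast
    thus "x \<in> {x. omega_limit f x \<subseteq> B}" using E_char[OF assms] by simp
  qed
  ultimately show ?thesis by blast
qed

end



context dyn begin

lemma baire2:
  fixes U :: "'a set"
  assumes U: "open U" "U \<noteq> {}"
    and G1: "countable G1" "\<forall>T\<in>G1. open T" "U \<subseteq> closure (\<Inter>G1)"
    and G2: "countable G2" "\<forall>T\<in>G2. open T" "U \<subseteq> closure (\<Inter>G2)"
  shows "\<Inter>G1 \<inter> \<Inter>G2 \<noteq> {}"
proof -
  define G where "G = (\<lambda>T. T \<union> - closure U) ` (G1 \<union> G2)"
  have cG: "countable G" unfolding G_def using G1 G2 by simp
  have dense: "closure T = UNIV" if TG: "T \<in> G" for T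
  proof -
    obtain T0 where T0: "T0 \<in> G1 \<union> G2" "T = T0 \<union> - closure U" using TG unfolding G_def by blast
    have "U \<subseteq> closure T0"
    proof (cases "T0 \<in> G1")
      case True
      hence "\<Inter>G1 \<subseteq> T0" by blast
      thus ?thesis using G1(3) closure_mono by blast
    next
      case False
      hence "\<Inter>G2 \<subseteq> T0" using T0 by blast
      thus ?thesis using G2(3) closure_mono by blast
    qed
    hence a: "closure U \<subseteq> closure T0" using closure_minimal[OF _ closed_closure] by blast
    have "T0 \<subseteq> T" using T0(2) by blast
    hence b: "closure T0 \<subseteq> closure T" by (rule closure_mono)
    have "- closure U \<subseteq> T" using T0(2) by blast
    hence c: "- closure U \<subseteq> closure T" using closure_subset[of T] by blast
    show ?thesis using a b c by blast
  qed
  have opG: "open T" if "T \<in> G" for T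
    using that G1(2) G2(2) unfolding G_def by auto
  have lc: "locally_compact_space (euclidean :: 'a topology)"
    by (rule compact_imp_locally_compact_space) (simp add: compact_space_def cpt)
  have "euclidean closure_of \<Inter>G = topspace (euclidean :: 'a topology)"
    by (rule Baire_category) (use lc regular_space_euclidean cG dense opG in auto)
  hence cl: "closure (\<Inter>G) = UNIV" by simp
  have "U \<inter> \<Inter>G \<noteq> {}"
    using open_Int_closure_eq_empty[OF U(1), of "\<Inter>G"] cl U(2) by auto
  then obtain p where p: "p \<in> U" "p \<in> \<Inter>G" by blast
  have "p \<in> closure U" using p(1) closure_subset by blast
  hence "p \<in> \<Inter>G1 \<inter> \<Inter>G2" using p(2) unfolding G_def by auto
  thus ?thesis by blast
qed

lemma partition:
  fixes E :: "'i \<Rightarrow> 'a set"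
  assumes I: "finite I"
    and Gd: "\<forall>i\<in>I. \<exists>G. countable G \<and> (\<forall>T\<in>G. open T) \<and> E i = \<Inter>G"
    and dj: "\<forall>i\<in>I. \<forall>j\<in>I. i \<noteq> j \<longrightarrow> E i \<inter> E j = {}"
    and V: "open V" "V \<noteq> {}" "V \<subseteq> (\<Union>i\<in>I. E i)"
  shows "\<exists>i\<in>I. interior (E i) \<inter> V \<noteq> {}"
proof -
  have main: "\<And>S U. S \<subseteq> I \<Longrightarrow> card S = k \<Longrightarrow> open U \<Longrightarrow> U \<noteq> {} \<Longrightarrow> U \<subseteq> V
      \<Longrightarrow> U \<subseteq> (\<Union>i\<in>S. E i) \<Longrightarrow> \<exists>i\<in>I. interior (E i) \<inter> V \<noteq> {}" for k
  proof (induction k rule: less_induct)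
    case (less k S U)
    have fS: "finite S" using less.prems(1) I finite_subset by blast
    show ?case
    proof (cases "\<exists>i\<in>S. \<not> U \<subseteq> closure (E i)")
      case True
      then obtain i where i: "i \<in> S" "\<not> U \<subseteq> closure (E i)" by blast
      define U' where "U' = U - closure (E i)"
      have "open U'" unfolding U'_def using less.prems(3) by auto
      moreover have "U' \<noteq> {}" unfolding U'_def using i(2) by blast
      moreover have "U' \<subseteq> V" unfolding U'_def using less.prems(5) by blast
      moreover have "U' \<subseteq> (\<Union>j\<in>S - {i}. E j)"
      proof
        fix x assume x: "x \<in> U'"
        then obtain j where j: "j \<in> S" "x \<in> E j" using less.prems(6) unfolding U'_def by blast
        have "x \<notin> E i" using x closure_subset[of "E i"] unfolding U'_def by blast
        hence "j \<noteq> i" using j by blast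
        thus "x \<in> (\<Union>j\<in>S - {i}. E j)" using j by blast
      qed
      moreover have "card (S - {i}) < k" using less.prems(2) fS i(1)
        by (metis card_Diff1_less)
      moreover have "S - {i} \<subseteq> I" using less.prems(1) by blast
      ultimately show ?thesis using less.IH[of "card (S - {i})" "S - {i}" U'] by simp
    next
      case False
      hence dense: "\<And>i. i \<in> S \<Longrightarrow> U \<subseteq> closure (E i)" by blast
      obtain i where i: "i \<in> S" using less.prems(4,6) by blast
      have "S = {i}"
      proof (rule ccontr)
        assume "S \<noteq> {i}"
        then obtain j where j: "j \<in> S" "j \<noteq> i" using i by blast
        have iI: "i \<in> I" and jI: "j \<in> I" using i j less.prems(1) by auto
        obtain G1 where G1: "countable G1" "\<forall>T\<in>G1. open T" "E i = \<Inter>G1"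
          using Gd[rule_format, OF iI] by blast
        obtain G2 where G2: "countable G2" "\<forall>T\<in>G2. open T" "E j = \<Inter>G2"
          using Gd[rule_format, OF jI] by blast
        have d1: "U \<subseteq> closure (\<Inter>G1)" using dense[OF i] G1(3) by simp
        have d2: "U \<subseteq> closure (\<Inter>G2)" using dense[OF j(1)] G2(3) by simp
        have "\<Inter>G1 \<inter> \<Inter>G2 \<noteq> {}"
          by (rule baire2[OF less.prems(3,4) G1(1,2) d1 G2(1,2) d2])
        moreover have "E i \<inter> E j = {}" using dj iI jI j(2) by blast
        ultimately show False using G1 G2 by simp
      qed
      hence "U \<subseteq> E i" using less.prems(6) by simp
      hence "U \<subseteq> interior (E i)" using less.prems(3) by (simp add: interior_maximal)
      thus ?thesis using less.prems(1,4,5) i by blast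
    qed
  qed
  show ?thesis by (rule main[OF order_refl refl V(1,2) order_refl V(3)])
qed

lemma density: assumes "finite (basic_sets f)"
  shows "closure (\<Union>B\<in>basic_sets f. basin f B) = UNIV"
proof -
  { fix x :: 'a and e :: real assume e: "e > 0"
    have "\<exists>B\<in>basic_sets f. interior {x. omega_limit f x \<subseteq> B} \<inter> ball x e \<noteq> {}"
    proof (rule partition[OF assms])
      show "\<forall>i\<in>basic_sets f. \<exists>G. countable G \<and> (\<forall>T\<in>G. open T) \<and> {x. omega_limit f x \<subseteq> i} = \<Inter> G"
        using E_Gdelta by blast
      show "\<forall>i\<in>basic_sets f. \<forall>j\<in>basic_sets f. i \<noteq> j \<longrightarrow> {x. omega_limit f x \<subseteq> i} \<inter> {x. omega_limit f x \<subseteq> j} = {}"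
        using E_disj by blast
      show "open (ball x e)" by simp
      show "ball x e \<noteq> {}" using e by simp
      show "ball x e \<subseteq> (\<Union>i\<in>basic_sets f. {x. omega_limit f x \<subseteq> i})" using cover by blast
    qed
    then obtain B y where "B \<in> basic_sets f" "y \<in> basin f B" "dist x y < e"
      unfolding basin_def by auto
    hence "\<exists>y\<in>(\<Union>B\<in>basic_sets f. basin f B). dist y x < e" by (metis UN_I dist_commute)
  }
  hence "\<And>x. x \<in> closure (\<Union>B\<in>basic_sets f. basin f B)" unfolding closure_approachable by blast
  thus ?thesis by blast
qed

end



context dyn begin

definition R :: "'a set \<Rightarrow> real \<Rightarrow> 'a set" where
  "R B \<epsilon> = {y. \<exists>b\<in>B. \<exists>e'. e' < \<epsilon> \<and> chn f e' b y}"

lemma R_open: "open (R B \<epsilon>)"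
  unfolding open_dist
proof (intro ballI)
  fix y assume "y \<in> R B \<epsilon>"
  then obtain b e' where be: "b \<in> B" "e' < \<epsilon>" "chn f e' b y" unfolding R_def by blast
  show "\<exists>e>0. \<forall>z. dist z y < e \<longrightarrow> z \<in> R B \<epsilon>"
  proof (intro exI[of _ "(\<epsilon> - e')/2"] conjI allI impI)
    show "(\<epsilon> - e')/2 > 0" using be by simp
    fix z assume z: "dist z y < (\<epsilon> - e')/2"
    have "chn f (e' + dist y z) b z" by (rule chn_end[OF be(3)]) simp
    moreover have "e' + dist y z < \<epsilon>" using z be(2) by (simp add: dist_commute)
    ultimately show "z \<in> R B \<epsilon>" unfolding R_def using be(1) by blast
  qed
qed

lemma R_mono: "\<epsilon> \<le> \<epsilon>' \<Longrightarrow> R B \<epsilon> \<subseteq> R B \<epsilon>'"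
  unfolding R_def by force

lemma term_bs: "terminal f B \<Longrightarrow> B \<in> basic_sets f"
  unfolding terminal_def by blast

lemma term_C: "terminal f B \<Longrightarrow> x \<in> B \<Longrightarrow> (x,y) \<in> chain_rel f \<Longrightarrow> y \<in> B"
  unfolding terminal_def by blast

lemma B_sub_R: assumes "terminal f B" "\<epsilon> > 0" shows "B \<subseteq> R B \<epsilon>"
proof
  fix b assume b: "b \<in> B"
  have "chain_recurrent f b" using bs_cr[OF term_bs[OF assms(1)] b] .
  hence "chn f (\<epsilon>/2) b b" using assms(2) unfolding chain_recurrent_def chain_rel_chn by simp
  thus "b \<in> R B \<epsilon>" unfolding R_def using b assms(2) by (intro CollectI bexI[of _ b] exI[of _ "\<epsilon>/2"]) auto
qed

lemma R_f: assumes "\<epsilon> > 0" shows "f ` closure (R B \<epsilon>) \<subseteq> R B \<epsilon>"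
proof
  fix w assume "w \<in> f ` closure (R B \<epsilon>)"
  then obtain z where z: "z \<in> closure (R B \<epsilon>)" "w = f z" by blast
  obtain d where d: "d > 0" "\<forall>x'. dist x' z < d \<longrightarrow> dist (f x') (f z) < \<epsilon>/2"
    using contE[of "\<epsilon>/2" z] assms by auto
  obtain y where y: "y \<in> R B \<epsilon>" "dist y z < d" using z(1) d(1) unfolding closure_approachable by blast
  obtain b e' where be: "b \<in> B" "e' < \<epsilon>" "chn f e' b y" using y(1) unfolding R_def by blast
  have "dist (f y) (f z) < \<epsilon>/2" using d y by blast
  hence "chn f (max e' (\<epsilon>/2)) y (f z)" by (intro chn_step) simp
  moreover have "chn f (max e' (\<epsilon>/2)) b y" by (rule chn_mono[OF be(3)]) simp
  ultimately have "chn f (max e' (\<epsilon>/2)) b (f z)" using chn_trans by blast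
  moreover have "max e' (\<epsilon>/2) < \<epsilon>" using be(2) assms by simp
  ultimately show "w \<in> R B \<epsilon>" unfolding R_def using be(1) z(2) by blast
qed

lemma R_closure: assumes "\<epsilon> > 0" shows "closure (R B \<epsilon>) \<subseteq> R B (2*\<epsilon>)"
proof
  fix y assume "y \<in> closure (R B \<epsilon>)"
  then obtain q where q: "q \<in> R B \<epsilon>" "dist q y < \<epsilon>" using assms unfolding closure_approachable by blast
  obtain b e' where be: "b \<in> B" "e' < \<epsilon>" "chn f e' b q" using q(1) unfolding R_def by blast
  have "chn f (e' + dist q y) b y" by (rule chn_end[OF be(3)]) simp
  moreover have "e' + dist q y < 2*\<epsilon>" using be(2) q(2) by simp
  ultimately show "y \<in> R B (2*\<epsilon>)" unfolding R_def using be(1) by blast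
qed

lemma cls_in_R: assumes "y \<in> R B \<epsilon>" shows "cls y \<subseteq> R B \<epsilon>"
proof
  fix z assume "z \<in> cls y"
  hence yz: "(y,z) \<in> chain_rel f" unfolding cls_def by blast
  obtain b e' where be: "b \<in> B" "e' < \<epsilon>" "chn f e' b y" using assms unfolding R_def by blast
  have "0 \<le> e'" using chn_nonneg[OF be(3)] .
  define e'' where "e'' = (e' + \<epsilon>)/2"
  have e'': "e' < e''" "e'' < \<epsilon>" "e'' > 0" using be(2) \<open>0 \<le> e'\<close> unfolding e''_def by auto
  have "chn f e'' b y" by (rule chn_mono[OF be(3)]) (use e'' in simp)
  moreover have "chn f e'' y z" using yz e''(3) unfolding chain_rel_chn by blast
  ultimately have "chn f e'' b z" by (rule chn_trans)
  thus "z \<in> R B \<epsilon>" unfolding R_def using be(1) e''(2) by blast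
qed

lemma sep1: assumes T: "terminal f B" and B': "B' \<in> basic_sets f" "B' \<noteq> B"
  shows "\<exists>\<epsilon>>0. \<not> B' \<subseteq> R B \<epsilon>"
proof (rule ccontr)
  assume H: "\<not> ?thesis"
  obtain p where p: "p \<in> B'" using bs_ne[OF B'(1)] by blast
  have pB: "p \<notin> B"
  proof
    assume "p \<in> B"
    hence "B = cls p" "B' = cls p" using bs_eq[OF term_bs[OF T]] bs_eq[OF B'(1)] p by auto
    thus False using B'(2) by simp
  qed
  have "\<forall>k::nat. \<exists>b e'. b \<in> B \<and> e' < inverse (Suc k) \<and> chn f e' b p"
  proof
    fix k :: nat
    have "B' \<subseteq> R B (inverse (Suc k))" using H by simp
    thus "\<exists>b e'. b \<in> B \<and> e' < inverse (Suc k) \<and> chn f e' b p" using p unfolding R_def by blast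
  qed
  then obtain bb ee where be: "\<And>k. bb k \<in> B" "\<And>k. ee k < inverse (Suc k)" "\<And>k. chn f (ee k) (bb k) p"
    by metis
  obtain b r where r: "strict_mono r" "(bb \<circ> r) \<longlonglongrightarrow> b" using seqc by blast
  have "b \<in> B" using closed_sequentially[OF bs_closed[OF term_bs[OF T]] _ r(2)] be(1) by simp
  moreover have "(b, p) \<in> chain_rel f" unfolding chain_rel_chn
  proof (intro allI impI)
    fix e :: real assume e: "e > 0"
    obtain d where d: "d > 0" "\<forall>x'. dist x' b < d \<longrightarrow> dist (f x') (f b) < e/2"
      using contE[of "e/2" b] e by auto
    obtain M where M: "\<forall>j\<ge>M. dist (bb (r j)) b < d"
      using r(2) d(1) unfolding lim_sequentially by (metis comp_apply)
    obtain M' where M': "inverse (real (Suc M')) < e/2" using reals_Archimedean[of "e/2"] e by auto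
    define j where "j = max M M'"
    have rj: "r j \<ge> M'" using seq_suble[OF r(1), of j] unfolding j_def by simp
    have "inverse (real (Suc (r j))) \<le> inverse (real (Suc M'))" using rj
      by (intro le_imp_inverse_le) auto
    hence 1: "ee (r j) < e/2" using be(2)[of "r j"] M' by linarith
    have "dist (f (bb (r j))) (f b) < e/2" using d M unfolding j_def by simp
    hence 2: "dist (f b) (f (bb (r j))) \<le> e/2" by (simp add: dist_commute)
    have "chn f (ee (r j) + e/2) b p" by (rule chn_start[OF be(3) 2])
    thus "chn f e b p" by (rule chn_mono) (use 1 in simp)
  qed
  ultimately have "p \<in> B" using term_C[OF T] by blast
  thus False using pB by simp
qed

lemma sep: assumes T: "terminal f B" and fin: "finite (basic_sets f)"
  shows "\<exists>\<epsilon>>0. \<forall>B'\<in>basic_sets f. B' \<noteq> B \<longrightarrow> \<not> B' \<subseteq> R B \<epsilon>"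
proof -
  define S where "S = basic_sets f - {B}"
  have "\<forall>B'\<in>S. \<exists>\<epsilon>>0. \<not> B' \<subseteq> R B \<epsilon>" using sep1[OF T] unfolding S_def by blast
  then obtain ef where ef: "\<And>B'. B' \<in> S \<Longrightarrow> ef B' > 0 \<and> \<not> B' \<subseteq> R B (ef B')" by metis
  define \<epsilon> where "\<epsilon> = Min (insert 1 (ef ` S))"
  have fS: "finite S" using fin unfolding S_def by simp
  have pos: "\<epsilon> > 0" unfolding \<epsilon>_def using fS ef by (subst Min_gr_iff) auto
  have "\<forall>B'\<in>basic_sets f. B' \<noteq> B \<longrightarrow> \<not> B' \<subseteq> R B \<epsilon>"
  proof (intro ballI impI)
    fix B' assume "B' \<in> basic_sets f" "B' \<noteq> B"
    hence B'S: "B' \<in> S" unfolding S_def by blast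
    have "\<epsilon> \<le> ef B'" unfolding \<epsilon>_def using fS B'S by (intro Min_le) auto
    hence "R B \<epsilon> \<subseteq> R B (ef B')" by (rule R_mono)
    thus "\<not> B' \<subseteq> R B \<epsilon>" using ef[OF B'S] by blast
  qed
  thus ?thesis using pos by blast
qed

lemma fB: assumes T: "terminal f B" shows "f ` B = B"
proof
  show "f ` B \<subseteq> B" using term_C[OF T] C_step by blast
next
  show "B \<subseteq> f ` B"
  proof
    fix b assume b: "b \<in> B"
    have cr: "\<And>e. e > 0 \<Longrightarrow> chn f e b b" using bs_cr[OF term_bs[OF T] b]
      unfolding chain_recurrent_def chain_rel_chn by blast
    have "\<forall>k::nat. \<exists>p. dist (f p) b \<le> inverse (Suc k) \<and> chn f (inverse (Suc k)) b p"
    proof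
      fix k :: nat
      obtain p where p: "dist (f p) b \<le> inverse (Suc k)" "p = b \<or> chn f (inverse (Suc k)) b p"
        using chn_penult[OF cr[of "inverse (Suc k)"]] by auto
      have "chn f (inverse (Suc k)) b p" using p(2) cr[of "inverse (Suc k)"] by auto
      thus "\<exists>p. dist (f p) b \<le> inverse (Suc k) \<and> chn f (inverse (Suc k)) b p" using p(1) by blast
    qed
    then obtain pp where pp: "\<And>k. dist (f (pp k)) b \<le> inverse (Suc k)" "\<And>k. chn f (inverse (Suc k)) b (pp k)"
      by metis
    obtain p r where r: "strict_mono r" "(pp \<circ> r) \<longlonglongrightarrow> p" using seqc by blast
    have fp: "f p = b"
    proof -
      have "\<forall>e>0. dist (f p) b < e"
      proof (intro allI impI)
        fix e :: real assume e: "e > 0"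
        obtain d where d: "d > 0" "\<forall>x'. dist x' p < d \<longrightarrow> dist (f x') (f p) < e/2"
          using contE[of "e/2" p] e by auto
        obtain M where M: "\<forall>j\<ge>M. dist (pp (r j)) p < d"
          using r(2) d(1) unfolding lim_sequentially by (metis comp_apply)
        obtain M' where M': "inverse (real (Suc M')) < e/2" using reals_Archimedean[of "e/2"] e by auto
        define j where "j = max M M'"
        have rj: "r j \<ge> M'" using seq_suble[OF r(1), of j] unfolding j_def by simp
        have "inverse (real (Suc (r j))) \<le> inverse (real (Suc M'))" using rj
          by (intro le_imp_inverse_le) auto
        hence 1: "dist (f (pp (r j))) b < e/2" using pp(1)[of "r j"] M' by linarith
        have 2: "dist (f (pp (r j))) (f p) < e/2" using d M unfolding j_def by simp
        have "dist (f p) b \<le> dist (f p) (f (pp (r j))) + dist (f (pp (r j))) b" by (rule dist_triangle)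
        thus "dist (f p) b < e" using 1 2 by (simp add: dist_commute)
      qed
      thus ?thesis by (metis dist_pos_lt less_irrefl)
    qed
    have "(b, p) \<in> chain_rel f" unfolding chain_rel_chn
    proof (intro allI impI)
      fix e :: real assume e: "e > 0"
      obtain M where M: "\<forall>j\<ge>M. dist (pp (r j)) p < e/2"
        using r(2) e unfolding lim_sequentially by (metis half_gt_zero comp_apply)
      obtain M' where M': "inverse (real (Suc M')) < e/2" using reals_Archimedean[of "e/2"] e by auto
      define j where "j = max M M'"
      have rj: "r j \<ge> M'" using seq_suble[OF r(1), of j] unfolding j_def by simp
      have "inverse (real (Suc (r j))) \<le> inverse (real (Suc M'))" using rj
        by (intro le_imp_inverse_le) auto
      hence 1: "inverse (real (Suc (r j))) < e/2" using M' by linarith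
      have "dist (pp (r j)) p < e/2" using M unfolding j_def by simp
      hence 2: "dist (pp (r j)) p \<le> e/2" by simp
      have "chn f (inverse (Suc (r j)) + e/2) b p" by (rule chn_end[OF pp(2) 2])
      thus "chn f e b p" by (rule chn_mono) (use 1 in simp)
    qed
    hence "p \<in> B" using term_C[OF T b] by blast
    thus "b \<in> f ` B" using fp by blast
  qed
qed

end



context dyn begin

lemma funpow_sub: "f ` U \<subseteq> U \<Longrightarrow> (f^^k) ` U \<subseteq> U"
proof (induction k)
  case 0 thus ?case by simp
next
  case (Suc k)
  have "(f^^Suc k) ` U = f ` ((f^^k) ` U)" by (simp add: image_comp)
  also have "\<dots> \<subseteq> f ` U" using Suc by blast
  finally show ?case using Suc by blast
qed

lemma funpow_dec: assumes "f ` U \<subseteq> U" "m \<le> n" shows "(f^^n) ` U \<subseteq> (f^^m) ` U"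
proof -
  have "f^^n = (f^^m) \<circ> (f^^(n-m))" using assms(2) by (metis funpow_add le_add_diff_inverse)
  hence "(f^^n) ` U = (f^^m) ` ((f^^(n-m)) ` U)" by (simp add: image_comp)
  thus ?thesis using funpow_sub[OF assms(1)] by blast
qed

lemma back_orbit:
  assumes "\<And>w. w \<in> A \<Longrightarrow> g w \<in> A \<and> f (g w) = w" "a \<in> A"
  shows "(f^^d) ((g^^(j+d)) a) = (g^^j) a"
proof (induction d)
  case 0 thus ?case by simp
next
  case (Suc d)
  have inA: "(g^^(j+d)) a \<in> A"
  proof (induction "j+d" arbitrary: j d)
    case 0 thus ?case using assms(2) by simp
  next
    case (Suc k) thus ?case using assms(1) by (metis funpow.simps(2) comp_apply add_Suc_right add_0_right add_Suc)
  qed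
  have "(f^^Suc d) ((g^^(j+Suc d)) a) = (f^^d) (f (g ((g^^(j+d)) a)))"
    by (simp add: funpow_swap1)
  also have "\<dots> = (f^^d) ((g^^(j+d)) a)" using assms(1)[OF inA] by simp
  finally show ?case using Suc by simp
qed


lemma term_attractor:
  assumes T: "terminal f B" and fin: "finite (basic_sets f)"
  shows "attractor f B \<and> visible f B"
proof -
  have Bbs: "B \<in> basic_sets f" using term_bs[OF T] .
  obtain \<epsilon>0 where e0: "\<epsilon>0 > 0" "\<And>B'. B' \<in> basic_sets f \<Longrightarrow> B' \<noteq> B \<Longrightarrow> \<not> B' \<subseteq> R B \<epsilon>0"
    using sep[OF T fin] by blast
  define \<epsilon> where "\<epsilon> = \<epsilon>0/2"
  have epos: "\<epsilon> > 0" using e0(1) unfolding \<epsilon>_def by simp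
  define U where "U = closure (R B \<epsilon>)"
  have clU: "closed U" unfolding U_def by simp
  have cU: "compact U" using compact_Int_closed[OF cpt clU] by simp
  have fU_R: "f ` U \<subseteq> R B \<epsilon>" unfolding U_def by (rule R_f[OF epos])
  have R_int: "R B \<epsilon> \<subseteq> interior U" unfolding U_def
    by (rule interior_maximal[OF closure_subset R_open])
  have fUi: "f ` U \<subseteq> interior U" using fU_R R_int by blast
  have fU: "f ` U \<subseteq> U" using fUi interior_subset by blast
  have U_R0: "U \<subseteq> R B \<epsilon>0" using R_closure[OF epos] unfolding U_def \<epsilon>_def by simp
  have BU: "B \<subseteq> U" using B_sub_R[OF T epos] closure_subset unfolding U_def by blast
  define A where "A = (\<Inter>n. (f^^n) ` U)"
  have cK: "compact ((f^^n) ` U)" for n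
    by (rule compact_continuous_image[OF continuous_on_subset[OF cont_funpow] cU]) simp
  have clK: "closed ((f^^n) ` U)" for n using compact_imp_closed[OF cK] .
  have clA: "closed A" unfolding A_def using clK by (simp add: closed_INT)
  have "A \<subseteq> (f^^0) ` U" unfolding A_def by blast
  hence AU: "A \<subseteq> U" by simp
  have fnB: "(f^^n) ` B = B" for n
  proof (induction n)
    case 0 thus ?case by simp
  next
    case (Suc n)
    have "(f^^Suc n) ` B = f ` ((f^^n) ` B)" by (simp add: image_comp)
    thus ?case using Suc fB[OF T] by simp
  qed
  have "B \<subseteq> (f^^n) ` U" for n using fnB[of n] image_mono[OF BU, of "f^^n"] by simp
  hence BA: "B \<subseteq> A" unfolding A_def by blast
  have Af: "a \<in> f ` A" if a: "a \<in> A" for a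
  proof -
    have "\<forall>n. \<exists>x. x \<in> (f^^n) ` U \<and> f x = a"
    proof
      fix n
      have "a \<in> (f^^Suc n) ` U" using a unfolding A_def by blast
      also have "(f^^Suc n) ` U = f ` ((f^^n) ` U)" by (simp add: image_comp)
      finally show "\<exists>x. x \<in> (f^^n) ` U \<and> f x = a" by blast
    qed
    then obtain xx where xx: "\<And>n. xx n \<in> (f^^n) ` U" "\<And>n. f (xx n) = a" by metis
    obtain x r where r: "strict_mono r" "(xx \<circ> r) \<longlonglongrightarrow> x" using seqc by blast
    have "x \<in> (f^^m) ` U" for m
    proof -
      have L: "(\<lambda>j. (xx \<circ> r) (j + m)) \<longlonglongrightarrow> x" using LIMSEQ_ignore_initial_segment[OF r(2)] .
      have M: "(xx \<circ> r) (j + m) \<in> (f^^m) ` U" for j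
      proof -
        have "m \<le> r (j + m)" using seq_suble[OF r(1), of "j+m"] by simp
        hence "(f^^(r (j+m))) ` U \<subseteq> (f^^m) ` U" by (rule funpow_dec[OF fU])
        thus ?thesis using xx(1)[of "r (j+m)"] by auto
      qed
      show ?thesis by (rule closed_sequentially[OF clK M L])
    qed
    hence xA: "x \<in> A" unfolding A_def by blast
    have "(f \<circ> (xx \<circ> r)) \<longlonglongrightarrow> f x"
      using isCont_tendsto_compose[OF _ r(2)] cont continuous_on_eq_continuous_at[OF open_UNIV]
      unfolding comp_def by blast
    moreover have "(f \<circ> (xx \<circ> r)) = (\<lambda>_. a)" using xx(2) by auto
    ultimately have "f x = a" using LIMSEQ_unique tendsto_const by metis
    thus ?thesis using xA by blast
  qed
  have AB: "A \<subseteq> B"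
  proof
    fix a assume a: "a \<in> A"
    have "\<forall>w\<in>A. \<exists>v. v \<in> A \<and> f v = w" using Af by blast
    then obtain g where g: "\<And>w. w \<in> A \<Longrightarrow> g w \<in> A \<and> f (g w) = w" by metis
    define aa where "aa k = (g^^k) a" for k
    have aaA: "aa k \<in> A" for k
      unfolding aa_def by (induction k) (use a g in auto)
    have aaf: "(f^^d) (aa (j + d)) = aa j" for j d
      unfolding aa_def by (rule back_orbit[OF g a])
    obtain y r where r: "strict_mono r" "(aa \<circ> r) \<longlonglongrightarrow> y" using seqc by blast
    have yA: "y \<in> A" using closed_sequentially[OF clA _ r(2)] aaA by simp
    have ya: "(y, a) \<in> chain_rel f" unfolding chain_rel_chn
    proof (intro allI impI)
      fix e :: real assume e: "e > 0"
      obtain d where d: "d > 0" "\<forall>x'. dist x' y < d \<longrightarrow> dist (f x') (f y) < e"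
        using contE[of e y] e by auto
      obtain M where M: "\<forall>j\<ge>M. dist (aa (r j)) y < d"
        using r(2) d(1) unfolding lim_sequentially by (metis comp_apply)
      define j where "j = Suc M"
      have rj: "r j \<ge> 1" using seq_suble[OF r(1), of j] unfolding j_def by simp
      have "chn f 0 ((f^^0) (aa (r j))) ((f^^(r j)) (aa (r j)))" by (rule chn_orbit) (use rj in simp)
      moreover have "(f^^(r j)) (aa (r j)) = a" using aaf[of 0 "r j"] aaf[of "r j" 0] by (simp add: aa_def)
      ultimately have c: "chn f 0 (aa (r j)) a" by simp
      have "dist (f (aa (r j))) (f y) < e" using d M unfolding j_def by simp
      hence "dist (f y) (f (aa (r j))) \<le> e" by (simp add: dist_commute)
      from chn_start[OF c this] show "chn f e y a" by simp
    qed
    have ycr: "chain_recurrent f y" unfolding chain_recurrent_def chain_rel_chn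
    proof (intro allI impI)
      fix e :: real assume e: "e > 0"
      obtain d where d: "d > 0" "\<forall>x'. dist x' y < d \<longrightarrow> dist (f x') (f y) < e/2"
        using contE[of "e/2" y] e by auto
      obtain M where M: "\<forall>j\<ge>M. dist (aa (r j)) y < min d (e/2)"
        using r(2) d(1) e unfolding lim_sequentially by (metis comp_apply min_less_iff_conj half_gt_zero)
      have lt: "r M < r (Suc M)" using r(1) by (simp add: strict_mono_def)
      have "chn f 0 ((f^^0) (aa (r (Suc M)))) ((f^^(r (Suc M) - r M)) (aa (r (Suc M))))"
        by (rule chn_orbit) (use lt in simp)
      moreover have "(f^^(r (Suc M) - r M)) (aa (r (Suc M))) = aa (r M)"
        using aaf[of "r (Suc M) - r M" "r M"] lt by simp
      ultimately have c: "chn f 0 (aa (r (Suc M))) (aa (r M))" by simp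
      have "dist (f (aa (r (Suc M)))) (f y) < e/2" using d M by simp
      hence "dist (f y) (f (aa (r (Suc M)))) \<le> e/2" by (simp add: dist_commute)
      from chn_start[OF c this] have c2: "chn f (e/2) y (aa (r M))" by simp
      have "dist (aa (r M)) y \<le> e/2" using M by (simp add: less_imp_le)
      from chn_end[OF c2 this] show "chn f e y y" by simp
    qed
    have "y \<in> R B \<epsilon>0" using yA AU U_R0 by blast
    hence "cls y \<subseteq> R B \<epsilon>0" by (rule cls_in_R)
    hence "cls y = B" using e0(2)[OF bs_cls[OF ycr]] by blast
    hence "y \<in> B" using in_cls[OF ycr] by simp
    thus "a \<in> B" using term_C[OF T _ ya] by blast
  qed
  have attr: "attractor f B" unfolding attractor_def
    using clU fUi AB BA unfolding A_def by blast
  have "U \<subseteq> {x. omega_limit f x \<subseteq> B}"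
  proof (rule subsetI, rule CollectI)
    fix x assume x: "x \<in> U"
    show "omega_limit f x \<subseteq> B"
    proof
      fix y assume y: "y \<in> omega_limit f x"
      have "y \<in> (f^^n) ` U" for n
      proof -
        have "\<exists>z\<in>(f^^n) ` U. dist z y < e" if e: "e > 0" for e
        proof -
          obtain m where m: "m \<ge> n" "dist ((f^^m) x) y < e" using y e unfolding omega_limit_def by blast
          have "(f^^m) x = (f^^n) ((f^^(m-n)) x)" using m(1) by (metis funpow_add le_add_diff_inverse comp_apply)
          moreover have "(f^^(m-n)) x \<in> U" using funpow_sub[OF fU] x by blast
          ultimately have "(f^^m) x \<in> (f^^n) ` U" by simp
          thus ?thesis using m(2) by blast
        qed
        thus ?thesis using closed_approachable[OF clK] by blast
      qed
      hence "y \<in> A" unfolding A_def by blast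
      thus "y \<in> B" using AB by blast
    qed
  qed
  hence "interior U \<subseteq> basin f B" unfolding basin_def by (rule interior_mono)
  moreover obtain b where "b \<in> B" using bs_ne[OF Bbs] by blast
  hence "f b \<in> interior U" using fUi BU by blast
  ultimately have "visible f B" unfolding visible_def by blast
  thus ?thesis using attr by blast
qed

end


theorem theorem2p1:
  fixes f :: "'a::metric_space \<Rightarrow> 'a"
  assumes "compact (UNIV :: 'a set)"
    and "continuous_on UNIV f"
    and "finite (basic_sets f)"
  shows "(\<forall>B. terminal f B \<longrightarrow> attractor f B \<and> visible f B)
    \<and> open (\<Union>B\<in>basic_sets f. basin f B)
    \<and> closure (\<Union>B\<in>basic_sets f. basin f B) = UNIV"
proof -
  interpret dyn f using assms(1,2) by unfold_locales
  have 1: "\<forall>B. terminal f B \<longrightarrow> attractor f B \<and> visible f B"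
    using term_attractor[OF _ assms(3)] by blast
  have 2: "open (\<Union>B\<in>basic_sets f. basin f B)"
    unfolding basin_def by (intro open_UN ballI open_interior)
  show ?thesis using 1 2 density[OF assms(3)] by blast
qed

end
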